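(* Let $K$ be an algebraically closed field of characteristic $0$ and let $G=\mathrm{SL}(2,K)$, regarded as the affine variety $\{ad-bc=1\}\subset \mathbb{A}^4_{a,b,c,d}$. For every $n\ge 1$, every non-constant regular function $f$ on $G^n$ omits no values in $K$, i.e. $f(G^n)=K$. *)

theory Defs
  imports "HOL-Computational_Algebra.Polynomial"
begin

definition alg_closed :: "'a::field itself \<Rightarrow> bool" where
  "alg_closed _ \<longleftrightarrow> (\<forall>p::'a poly. degree p \<ge> 1 \<longrightarrow> (\<exists>x. poly p x = 0))"

text \<open>Polynomial functions on the affine space \<open>K^N\<close>, points being \<open>nat \<Rightarrow> K\<close>
  (only the coordinates \<open>0..<N\<close> are used).\<close>
inductive_set poly_funs :: "nat \<Rightarrow> ((nat \<Rightarrow> 'a::comm_ring_1) \<Rightarrow> 'a) set" for N :: nat where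
  const: "(\<lambda>x. c) \<in> poly_funs N"
| var: "i < N \<Longrightarrow> (\<lambda>x. x i) \<in> poly_funs N"
| add: "p \<in> poly_funs N \<Longrightarrow> q \<in> poly_funs N \<Longrightarrow> (\<lambda>x. p x + q x) \<in> poly_funs N"
| mult: "p \<in> poly_funs N \<Longrightarrow> q \<in> poly_funs N \<Longrightarrow> (\<lambda>x. p x * q x) \<in> poly_funs N"

text \<open>\<open>SL(2,K)^n\<close> as an affine variety in \<open>K^{4n}\<close>: the \<open>i\<close>-th factor has coordinates
  \<open>(a,b,c,d) = (x(4i), x(4i+1), x(4i+2), x(4i+3))\<close>; coordinates \<open>\<ge> 4n\<close> are set to 0.\<close>
definition SL2_pow :: "nat \<Rightarrow> (nat \<Rightarrow> 'a::comm_ring_1) set" where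
  "SL2_pow n = {x. (\<forall>i<n. x (4*i) * x (4*i+3) - x (4*i+1) * x (4*i+2) = 1)
                  \<and> (\<forall>j\<ge>4*n. x j = 0)}"

definition regular_on_SL2_pow :: "nat \<Rightarrow> ((nat \<Rightarrow> 'a::comm_ring_1) \<Rightarrow> 'a) \<Rightarrow> bool" where
  "regular_on_SL2_pow n f \<longleftrightarrow> (\<exists>p\<in>poly_funs (4*n). \<forall>x\<in>SL2_pow n. f x = p x)"

end

theory Submission
  imports Defs
begin

definition set4 :: "nat \<Rightarrow> 'a \<Rightarrow> 'a \<Rightarrow> 'a \<Rightarrow> 'a \<Rightarrow> (nat \<Rightarrow> 'a) \<Rightarrow> (nat \<Rightarrow> 'a)" where
  "set4 i a b c d x = x(4*i := a, 4*i+1 := b, 4*i+2 := c, 4*i+3 := d)"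

definition Uop :: "nat \<Rightarrow> 'a::field \<Rightarrow> (nat \<Rightarrow> 'a) \<Rightarrow> (nat \<Rightarrow> 'a)" where
  "Uop i t x = set4 i (x(4*i)) (x(4*i)*t + x(4*i+1)) (x(4*i+2)) (x(4*i+2)*t + x(4*i+3)) x"

definition Lop :: "nat \<Rightarrow> 'a::field \<Rightarrow> (nat \<Rightarrow> 'a) \<Rightarrow> (nat \<Rightarrow> 'a)" where
  "Lop i t x = set4 i (x(4*i) + x(4*i+1)*t) (x(4*i+1)) (x(4*i+2) + x(4*i+3)*t) (x(4*i+3)) x"

definition Rel :: "nat \<Rightarrow> ((nat \<Rightarrow> 'a::field) \<times> (nat \<Rightarrow> 'a)) set" where
  "Rel n = {(x,y). x \<in> SL2_pow n \<and> (\<exists>i<n. \<exists>t. y = Uop i t x \<or> y = Lop i t x)}"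

lemma set4_coords[simp]:
  "set4 i a b c d x (4*i) = a" "set4 i a b c d x (4*i+1) = b"
  "set4 i a b c d x (4*i+2) = c" "set4 i a b c d x (4*i+3) = d"
  by (simp_all add: set4_def)

lemma set4_coords'[simp]:
  "set4 i a b c d x (Suc (4*i)) = b"
  "set4 i a b c d x (Suc (Suc (4*i))) = c" "set4 i a b c d x (Suc (Suc (Suc (4*i)))) = d"
  by (simp_all add: set4_def)

lemma set4_set4[simp]: "set4 i a b c d (set4 i a' b' c' d' x) = set4 i a b c d x"
  by (rule ext) (simp add: set4_def)

lemma set4_self: "set4 i (x(4*i)) (x(4*i+1)) (x(4*i+2)) (x(4*i+3)) x = x"
  by (rule ext) (simp add: set4_def)

lemma set4_mem:
  assumes "x \<in> SL2_pow n" "i < n" "a*d - b*c = (1::'a::comm_ring_1)"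
  shows "set4 i a b c d x \<in> SL2_pow n"
proof -
  have "\<forall>k<n. set4 i a b c d x (4*k) * set4 i a b c d x (4*k+3) - set4 i a b c d x (4*k+1) * set4 i a b c d x (4*k+2) = 1"
  proof (intro allI impI)
    fix k assume k: "k < n"
    show "set4 i a b c d x (4*k) * set4 i a b c d x (4*k+3) - set4 i a b c d x (4*k+1) * set4 i a b c d x (4*k+2) = 1"
    proof (cases "k = i")
      case True then show ?thesis using assms by simp
    next
      case False
      then have "set4 i a b c d x (4*k) = x (4*k)" "set4 i a b c d x (4*k+1) = x (4*k+1)"
        "set4 i a b c d x (4*k+2) = x (4*k+2)" "set4 i a b c d x (4*k+3) = x (4*k+3)"
        by (simp_all add: set4_def)
      then show ?thesis using assms(1) k by (simp add: SL2_pow_def)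
    qed
  qed
  moreover have "\<forall>j\<ge>4*n. set4 i a b c d x j = 0"
    using assms(1,2) by (auto simp: set4_def SL2_pow_def)
  ultimately show ?thesis by (simp add: SL2_pow_def)
qed

lemma stepU:
  assumes "x \<in> SL2_pow n" "i < n" "a*d - b*c = (1::'a::field)" "b' = a*t+b" "d' = c*t+d"
  shows "(set4 i a b c d x, set4 i a b' c d' x) \<in> Rel n"
proof -
  have "set4 i a b' c d' x = Uop i t (set4 i a b c d x)"
    using assms by (simp add: Uop_def)
  then show ?thesis using assms set4_mem[OF assms(1-3)] unfolding Rel_def by blast
qed

lemma stepL:
  assumes "x \<in> SL2_pow n" "i < n" "a*d - b*c = (1::'a::field)" "a' = a+b*t" "c' = c+d*t"
  shows "(set4 i a b c d x, set4 i a' b c' d x) \<in> Rel n"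
proof -
  have "set4 i a' b c' d x = Lop i t (set4 i a b c d x)"
    using assms by (simp add: Lop_def)
  then show ?thesis using assms set4_mem[OF assms(1-3)] unfolding Rel_def by blast
qed

lemma block_c:
  assumes "x \<in> SL2_pow n" "i < n" "a*d - b*c = (1::'a::field)" "c \<noteq> 0"
  shows "(set4 i a b c d x, set4 i 1 0 0 1 x) \<in> (Rel n)\<^sup>*"
proof -
  define b1 where "b1 = a*((1-d)/c) + b"
  have s1: "(set4 i a b c d x, set4 i a b1 c 1 x) \<in> Rel n"
    by (rule stepU[OF assms(1-3), where t="(1-d)/c"]) (use assms(4) in \<open>simp_all add: b1_def field_simps\<close>)
  have d1: "a*1 - b1*c = 1" using assms(3,4) by (simp add: b1_def field_simps)
  have s2: "(set4 i a b1 c 1 x, set4 i (a - b1*c) b1 0 1 x) \<in> Rel n"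
    by (rule stepL[OF assms(1,2) d1, where t="-c"]) simp_all
  have d2: "a - b1*c = 1" using d1 by simp
  have s3': "(set4 i (a - b1*c) b1 0 1 x, set4 i (a - b1*c) 0 0 1 x) \<in> Rel n"
    by (rule stepU[OF assms(1,2), where t="-b1"]) (simp_all add: d2)
  have s3: "(set4 i (a - b1*c) b1 0 1 x, set4 i 1 0 0 1 x) \<in> Rel n"
    using s3' by (simp add: d2)
  show ?thesis using s1 s2 s3 by (meson r_into_rtrancl rtrancl_trans)
qed

lemma block:
  assumes "x \<in> SL2_pow n" "i < n" "a*d - b*c = (1::'a::field)"
  shows "(set4 i a b c d x, set4 i 1 0 0 1 x) \<in> (Rel n)\<^sup>*"
proof (cases "c = 0")
  case False then show ?thesis using block_c assms by blast
next
  case True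
  then have "d \<noteq> 0" using assms(3) by auto
  have s: "(set4 i a b c d x, set4 i (a+b) b (c+d) d x) \<in> Rel n"
    by (rule stepL[OF assms, where t=1]) simp_all
  have "(a+b)*d - b*(c+d) = 1" using assms(3) by (simp add: algebra_simps)
  then have "(set4 i (a+b) b (c+d) d x, set4 i 1 0 0 1 x) \<in> (Rel n)\<^sup>*"
    using block_c[OF assms(1,2)] True \<open>d \<noteq> 0\<close> by simp
  then show ?thesis using s by (meson converse_rtrancl_into_rtrancl)
qed

fun idb :: "nat \<Rightarrow> (nat \<Rightarrow> 'a::comm_ring_1) \<Rightarrow> (nat \<Rightarrow> 'a)" where
  "idb 0 x = x"
| "idb (Suc m) x = set4 m 1 0 0 1 (idb m x)"

lemma idb_coord:
  "idb m x j = (if j < 4*m then (if j mod 4 = 0 \<or> j mod 4 = 3 then 1 else 0) else x j)"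
proof (induction m arbitrary: j)
  case 0 then show ?case by simp
next
  case (Suc m)
  show ?case
  proof (cases "j < 4*m \<or> j \<ge> 4*m+4")
    case True
    then have "idb (Suc m) x j = idb m x j" by (auto simp: set4_def)
    then show ?thesis using Suc True by auto
  next
    case False
    then have "j = 4*m \<or> j = 4*m+1 \<or> j = 4*m+2 \<or> j = 4*m+3" by auto
    then show ?thesis by (auto simp: set4_def; presburger)
  qed
qed

lemma idb_reach:
  assumes "x \<in> SL2_pow n" "m \<le> n"
  shows "idb m x \<in> SL2_pow n \<and> (x, idb m x) \<in> (Rel (n::nat))\<^sup>*"
  using assms(2)
proof (induction m)
  case 0 then show ?case using assms by simp
next
  case (Suc m)
  then have IH: "idb m x \<in> SL2_pow n" "(x, idb m x) \<in> (Rel n)\<^sup>*" and mn: "m < n" by auto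
  let ?y = "idb m x"
  have det: "?y (4*m) * ?y (4*m+3) - ?y (4*m+1) * ?y (4*m+2) = 1"
    using IH(1) mn by (simp add: SL2_pow_def)
  have "(set4 m (?y (4*m)) (?y (4*m+1)) (?y (4*m+2)) (?y (4*m+3)) ?y, set4 m 1 0 0 1 ?y) \<in> (Rel n)\<^sup>*"
    by (rule block[OF IH(1) mn det])
  then have "(?y, idb (Suc m) x) \<in> (Rel n)\<^sup>*" by (simp only: set4_self idb.simps)
  moreover have "idb (Suc m) x \<in> SL2_pow n" using set4_mem[OF IH(1) mn] by simp
  ultimately show ?case using IH(2) by (meson rtrancl_trans)
qed

lemma idb_eq:
  assumes "x \<in> SL2_pow n" "y \<in> SL2_pow n"
  shows "idb n x = idb n y"
  using assms by (auto simp: idb_coord SL2_pow_def intro!: ext)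

lemma poly_funs_line:
  assumes "p \<in> poly_funs N"
  shows "\<exists>Q. \<forall>t. p (\<lambda>j. poly (P j) t) = poly Q t"
  using assms
proof induction
  case (const c) then show ?case by (rule exI[of _ "[:c:]"]) simp
next
  case (var i) show ?case by (intro exI[of _ "P i"]) simp
next
  case (add p q)
  then obtain Q1 Q2 where "\<forall>t. p (\<lambda>j. poly (P j) t) = poly Q1 t" "\<forall>t. q (\<lambda>j. poly (P j) t) = poly Q2 t" by blast
  then show ?case by (intro exI[of _ "Q1 + Q2"]) simp
next
  case (mult p q)
  then obtain Q1 Q2 where "\<forall>t. p (\<lambda>j. poly (P j) t) = poly Q1 t" "\<forall>t. q (\<lambda>j. poly (P j) t) = poly Q2 t" by blast
  then show ?case by (intro exI[of _ "Q1 * Q2"]) simp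
qed

lemma poly_surj:
  fixes Q :: "'a::field poly"
  assumes "alg_closed TYPE('a)" "poly Q r \<noteq> poly Q s"
  shows "\<exists>t. poly Q t = c"
proof -
  have "degree Q \<noteq> 0"
  proof
    assume "degree Q = 0"
    then obtain k where "Q = [:k:]" by (metis degree_eq_zeroE)
    then show False using assms(2) by simp
  qed
  then have "degree (Q + [:-c:]) = degree Q"
    by (intro degree_add_eq_left) simp
  then have "degree (Q + [:-c:]) \<ge> 1" using \<open>degree Q \<noteq> 0\<close> by simp
  then obtain t where "poly (Q + [:-c:]) t = 0" using assms(1) unfolding alg_closed_def by blast
  then show ?thesis by auto
qed

lemma line_surj:
  fixes f :: "(nat \<Rightarrow> 'a::field) \<Rightarrow> 'a"
  assumes ac: "alg_closed TYPE('a)" and p: "p \<in> poly_funs N" and fp: "\<forall>x\<in>S. f x = p x"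
    and gS: "\<forall>t. g t \<in> S" and g0: "g 0 = y" and gP: "\<forall>t. g t = (\<lambda>j. poly (P j) t)"
    and ne: "f y \<noteq> f (g s)"
  shows "\<exists>w\<in>S. f w = c"
proof -
  obtain Q where Q: "\<forall>t. p (\<lambda>j. poly (P j) t) = poly Q t" using poly_funs_line[OF p] by blast
  have fg: "f (g t) = poly Q t" for t using fp gS gP Q by metis
  have "poly Q 0 \<noteq> poly Q s" using ne g0 fg by metis
  then obtain t where "poly Q t = c" using poly_surj[OF ac] by blast
  then show ?thesis using fg gS by metis
qed

lemma Uop_poly: "Uop i t y = (\<lambda>j. poly (if j = 4*i+1 then [:y(4*i+1), y(4*i):]
   else if j = 4*i+3 then [:y(4*i+3), y(4*i+2):] else [:y j:]) t)"
  by (rule ext) (auto simp: Uop_def set4_def algebra_simps)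

lemma Lop_poly: "Lop i t y = (\<lambda>j. poly (if j = 4*i then [:y(4*i), y(4*i+1):]
   else if j = 4*i+2 then [:y(4*i+2), y(4*i+3):] else [:y j:]) t)"
  by (rule ext) (auto simp: Lop_def set4_def algebra_simps)

lemma Uop0: "Uop i 0 y = y" by (rule ext) (simp add: Uop_def set4_def)
lemma Lop0: "Lop i 0 y = y" by (rule ext) (simp add: Lop_def set4_def)

lemma Uop_mem: assumes "y \<in> SL2_pow n" "i < n" shows "Uop i t y \<in> SL2_pow n"
proof -
  have "y (4*i) * y (4*i+3) - y (4*i+1) * y (4*i+2) = 1" using assms by (simp add: SL2_pow_def)
  then have "y (4*i) * (y (4*i+2)*t + y (4*i+3)) - (y (4*i)*t + y (4*i+1)) * y (4*i+2) = 1"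
    by (simp add: algebra_simps)
  then show ?thesis unfolding Uop_def by (rule set4_mem[OF assms])
qed

lemma Lop_mem: assumes "y \<in> SL2_pow n" "i < n" shows "Lop i t y \<in> SL2_pow n"
proof -
  have "y (4*i) * y (4*i+3) - y (4*i+1) * y (4*i+2) = 1" using assms by (simp add: SL2_pow_def)
  then have "(y (4*i) + y (4*i+1)*t) * y (4*i+3) - y (4*i+1) * (y (4*i+2) + y (4*i+3)*t) = 1"
    by (simp add: algebra_simps)
  then show ?thesis unfolding Lop_def by (rule set4_mem[OF assms])
qed

lemma chain:
  fixes f :: "(nat \<Rightarrow> 'a::field) \<Rightarrow> 'a"
  assumes ac: "alg_closed TYPE('a)" and p: "p \<in> poly_funs N" and fp: "\<forall>x\<in>SL2_pow n. f x = p x"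
    and xz: "(x,z) \<in> (Rel n)\<^sup>*"
  shows "f x \<noteq> f z \<longrightarrow> (\<exists>w\<in>SL2_pow n. f w = c)"
  using xz
proof (induction rule: rtrancl_induct)
  case base then show ?case by simp
next
  case (step y z)
  show ?case
  proof (cases "f x = f y")
    case False then show ?thesis using step.IH by blast
  next
    case True
    from step.hyps(2) obtain i t where y: "y \<in> SL2_pow n" and i: "i < n"
      and z: "z = Uop i t y \<or> z = Lop i t y" unfolding Rel_def by blast
    show ?thesis
    proof
      assume ne: "f x \<noteq> f z"
      show "\<exists>w\<in>SL2_pow n. f w = c"
        using z
      proof
        assume z: "z = Uop i t y"
        show ?thesis
          by (rule line_surj[OF ac p fp, where g="\<lambda>t. Uop i t y" and y=y and s=t])
             (use Uop_mem[OF y i] Uop0 Uop_poly ne True z in auto)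
      next
        assume z: "z = Lop i t y"
        show ?thesis
          by (rule line_surj[OF ac p fp, where g="\<lambda>t. Lop i t y" and y=y and s=t])
             (use Lop_mem[OF y i] Lop0 Lop_poly ne True z in auto)
      qed
    qed
  qed
qed

theorem lemma2p1:
  fixes f :: "(nat \<Rightarrow> 'a::field_char_0) \<Rightarrow> 'a" and n :: nat
  assumes "alg_closed TYPE('a)"
    and "n \<ge> 1"
    and "regular_on_SL2_pow n f"
    and "\<exists>x\<in>SL2_pow n. \<exists>y\<in>SL2_pow n. f x \<noteq> f y"
  shows "f ` SL2_pow n = UNIV"
proof -
  obtain p where p: "p \<in> poly_funs (4*n)" and fp: "\<forall>x\<in>SL2_pow n. f x = p x"
    using assms(3) unfolding regular_on_SL2_pow_def by blast
  obtain x y where x: "x \<in> SL2_pow n" and y: "y \<in> SL2_pow n" and ne: "f x \<noteq> f y"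
    using assms(4) by blast
  have rx: "(x, idb n x) \<in> (Rel n)\<^sup>*" using idb_reach[OF x] by simp
  have ry: "(y, idb n x) \<in> (Rel n)\<^sup>*" using idb_reach[OF y] idb_eq[OF x y] by simp
  have "\<exists>w\<in>SL2_pow n. f w = c" for c
  proof (cases "f x = f (idb n x)")
    case True
    then have "f y \<noteq> f (idb n x)" using ne by simp
    then show ?thesis using chain[OF assms(1) p fp ry] by blast
  next
    case False
    then show ?thesis using chain[OF assms(1) p fp rx] by blast
  qed
  then show ?thesis by (metis UNIV_eq_I image_eqI)
qed

end
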